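(* Let $\mathcal F$ be a TBF algorithm and $G$ a Tanner graph. Let $V_{\mathrm e}\subset V(G)$ be the set of initially corrupt variable nodes and $I$ the induced subgraph of $G$ on $V_{\mathrm e}$. If there is no subset $V_{\mathrm s}\subset V(G)$ with $V_{\mathrm s}\supset V_{\mathrm e}$ such that the induced subgraph of $G$ on $V_{\mathrm s}$ is isomorphic to a graph in $\mathscr E_I^{\mathrm r}(\mathcal F)$, then $\mathcal F$ run on $G$ with initially corrupt set $V_{\mathrm e}$ converges (reaches zero syndrome) within at most $l^{\mathrm m}_{\mathcal F}$ iterations.
   Context: Tanner graphs: a Tanner graph $G$ is a bipartite graph with variable nodes $V(G)$, check nodes $C(G)$ and edges $E(G)$; every variable node has degree $d_{\mathrm v}$ (fixed). A subgraph $U$ of $G$ has $V(U)\subset V(G)$, $C(U)\subset C(G)$, $E(U)\subset E(G)$; $G$ also "contains" any graph isomorphic to a subgraph. The induced subgraph on $V_{\mathrm s}\subset V(G)$ has variable nodes $V_{\mathrm s}$, all check nodes adjacent to $V_{\mathrm s}$, and all edges of $G$ incident to $V_{\mathrm s}$. Decoding setting: the all-zero codeword is sent over the binary symmetric channel; $\mathbf y$ is the received vector; $\hat{\mathbf x}^l$ is the decision vector after iteration $l$ (with $\hat{\mathbf x}^0=\mathbf y$), and $\mathbf s^l=\hat{\mathbf x}^lH^{\mathrm T}$ its syndrome ($H$ the biadjacency matrix). A variable node $v$ is initially corrupt if $y_v=1$. TBF algorithm $\mathcal F=(f,l^{\mathrm m}_{\mathcal F},\Delta_{\mathrm v},\Delta_{\mathrm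 c})$: variable node states lie in $\mathcal A_{\mathrm v}=\{0_{\mathrm s},0_{\mathrm w},1_{\mathrm w},1_{\mathrm s}\}$ (state $a_{\mathrm s}$ or $a_{\mathrm w}$ means decision bit $a$), check node states in $\mathcal A_{\mathrm c}=\{0_{\mathrm p},0_{\mathrm n},1_{\mathrm p},1_{\mathrm n}\}$. Initialization: $w^0_v=\Delta_{\mathrm v}(y_v)$ with $\Delta_{\mathrm v}(0)\in\{0_{\mathrm s},0_{\mathrm w}\}$, $\Delta_{\mathrm v}(1)\in\{1_{\mathrm s},1_{\mathrm w}\}$; $z^1_c=\Delta_{\mathrm c}(s^0_c)$ with $\Delta_{\mathrm c}(0)\in\{0_{\mathrm p},0_{\mathrm n}\}$, $\Delta_{\mathrm c}(1)\in\{1_{\mathrm p},1_{\mathrm n}\}$. For $l=1,2,\dots$, while the syndrome is nonzero and $l<l^{\mathrm m}_{\mathcal F}$: every variable node updates $w^l_v=f(w^{l-1}_v,\chi^l_{0_{\mathrm p}}(v),\chi^l_{0_{\mathrm n}}(v),\chi^l_{1_{\mathrm p}}(v),\chi^l_{1_{\mathrm n}}(v))$, where $\chi^l_a(v)$ is the number of neighboring check nodes $c$ with $z^l_c=a$; then every check node updates $z^{l+1}_c=\Phi(s^{l-1}_c,s^l_c)$ with $\Phi(0,0)=0_{\mathrm p},\Phi(0,1)=1_{\mathrm n},\Phi(1,0)=0_{\mathrm n},\Phi(1,1)=1_{\mathrm p}$. Here $f:\mathcal A_{\mathrm v}\times\Xi_{d_{\mathrm v}}\to\mathcal A_{\mathrm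 v}$, where $\Xi_{d_{\mathrm v}}$ is the set of 4-tuples of nonnegative integers summing to $d_{\mathrm v}$; $f$ is symmetric with respect to $0$ and $1$ and every variable-node state is reachable from every other. Failure: for a TBF algorithm $\mathcal F$, a Tanner graph $G$ and a set $V_{\mathrm e}$ of initially corrupt variable nodes with induced subgraph $I$, "$\mathcal F$ fails on the subgraph $I$ of $G$" means $\mathcal F$ run on $G$ with initially corrupt set $V_{\mathrm e}$ does not converge (does not reach zero syndrome) within $l^{\mathrm m}_{\mathcal F}$ iterations. Trapping sets: for a Tanner graph $I$, $\mathscr E_I(\mathcal F)$ is the set of Tanner graphs $S$ containing a subgraph $J$ isomorphic to $I$ such that $\mathcal F$ fails on $J$ of $S$. $S_1\in\mathscr E_I(\mathcal F)$, with $\mathcal F$ failing on its subgraph $J_1$, belongs to $\mathscr E_I^{\mathrm r}(\mathcal F)$ if there is no $S_2\in\mathscr E_I(\mathcal F)$ with a subgraph $J_2$ such that $\mathcal F$ fails on $J_2$ of $S_2$ and there is an isomorphism between $S_2$ and a proper subgraph of $S_1$ mapping $V(J_2)$ into $V(J_1)$. Elements of $\mathscr E_I^{\mathrm r}(\mathcal F)$ are trapping sets of $\mathcal F$ with inducing set $I$; $\mathscr E_I^{\mathrm r}(\mathcal F)$ is the trapping set profile with inducing set $I$. *)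

theory Defs
  imports Main
begin

record 'v tgraph =
  vn :: "'v set"
  cn :: "'v set"
  ed :: "('v \<times> 'v) set"

definition bigraph :: "'v tgraph \<Rightarrow> bool" where
  "bigraph G \<longleftrightarrow> finite (vn G) \<and> finite (cn G) \<and> vn G \<inter> cn G = {}
     \<and> ed G \<subseteq> vn G \<times> cn G"

definition tanner :: "nat \<Rightarrow> 'v tgraph \<Rightarrow> bool" where
  "tanner dv G \<longleftrightarrow> bigraph G \<and> (\<forall>v\<in>vn G. card {c. (v, c) \<in> ed G} = dv)"

definition subgraph :: "'v tgraph \<Rightarrow> 'v tgraph \<Rightarrow> bool" where
  "subgraph U G \<longleftrightarrow> bigraph U \<and> vn U \<subseteq> vn G \<and> cn U \<subseteq> cn G \<and> ed U \<subseteq> ed G"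

definition induced :: "'v tgraph \<Rightarrow> 'v set \<Rightarrow> 'v tgraph" where
  "induced G Vs = \<lparr> vn = Vs,
                    cn = {c \<in> cn G. \<exists>v\<in>Vs. (v, c) \<in> ed G},
                    ed = {(v, c) \<in> ed G. v \<in> Vs} \<rparr>"

definition iso :: "('v \<Rightarrow> 'w) \<Rightarrow> 'v tgraph \<Rightarrow> 'w tgraph \<Rightarrow> bool" where
  "iso \<phi> G H \<longleftrightarrow> bij_betw \<phi> (vn G) (vn H) \<and> bij_betw \<phi> (cn G) (cn H)
     \<and> (\<forall>v\<in>vn G. \<forall>c\<in>cn G. (v, c) \<in> ed G \<longleftrightarrow> (\<phi> v, \<phi> c) \<in> ed H)"

definition isomorphic :: "'v tgraph \<Rightarrow> 'w tgraph \<Rightarrow> bool" where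
  "isomorphic G H \<longleftrightarrow> (\<exists>\<phi>. iso \<phi> G H)"

datatype vstate = V0s | V0w | V1w | V1s
datatype cstate = C0p | C0n | C1p | C1n

fun vbit :: "vstate \<Rightarrow> bool" where
  "vbit V0s = False" | "vbit V0w = False" | "vbit V1w = True" | "vbit V1s = True"

fun vflip :: "vstate \<Rightarrow> vstate" where
  "vflip V0s = V1s" | "vflip V0w = V1w" | "vflip V1w = V0w" | "vflip V1s = V0s"

text \<open>A TBF algorithm (f, lmax, Delta_v, Delta_c); the argument tuple of f is
  (chi_0p, chi_0n, chi_1p, chi_1n).\<close>
record tbf =
  tf :: "vstate \<Rightarrow> nat \<times> nat \<times> nat \<times> nat \<Rightarrow> vstate"
  lmax :: nat
  dlt_v :: "bool \<Rightarrow> vstate"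
  dlt_c :: "bool \<Rightarrow> cstate"

definition Xi :: "nat \<Rightarrow> (nat \<times> nat \<times> nat \<times> nat) set" where
  "Xi dv = {(a, b, c, d). a + b + c + d = dv}"

definition is_TBF :: "nat \<Rightarrow> tbf \<Rightarrow> bool" where
  "is_TBF dv F \<longleftrightarrow>
     dlt_v F False \<in> {V0s, V0w} \<and> dlt_v F True \<in> {V1s, V1w} \<and>
     dlt_c F False \<in> {C0p, C0n} \<and> dlt_c F True \<in> {C1p, C1n} \<and>
     (\<forall>w. \<forall>x\<in>Xi dv. tf F (vflip w) x = vflip (tf F w x)) \<and>
     (\<forall>a b. (a, b) \<in> {(w, tf F w x) | w x. x \<in> Xi dv}\<^sup>*)"

definition Phi :: "bool \<Rightarrow> bool \<Rightarrow> cstate" where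
  "Phi a b = (if b then (if a then C1p else C1n) else (if a then C0n else C0p))"

definition synd :: "'v tgraph \<Rightarrow> ('v \<Rightarrow> vstate) \<Rightarrow> 'v \<Rightarrow> bool" where
  "synd G w c = odd (card {v \<in> vn G. (v, c) \<in> ed G \<and> vbit (w v)})"

definition chi :: "'v tgraph \<Rightarrow> ('v \<Rightarrow> cstate) \<Rightarrow> 'v \<Rightarrow> nat \<times> nat \<times> nat \<times> nat" where
  "chi G z v =
     (card {c \<in> cn G. (v, c) \<in> ed G \<and> z c = C0p},
      card {c \<in> cn G. (v, c) \<in> ed G \<and> z c = C0n},
      card {c \<in> cn G. (v, c) \<in> ed G \<and> z c = C1p},
      card {c \<in> cn G. (v, c) \<in> ed G \<and> z c = C1n})"

text \<open>tstate F G Ve l = (w^l, z^(l+1)), where Ve is the set of initially corrupt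
  variable nodes (received bit y_v = 1 iff v in Ve).\<close>
primrec tstate :: "tbf \<Rightarrow> 'v tgraph \<Rightarrow> 'v set \<Rightarrow> nat \<Rightarrow> ('v \<Rightarrow> vstate) \<times> ('v \<Rightarrow> cstate)" where
  "tstate F G Ve 0 =
     (let w0 = (\<lambda>v. dlt_v F (v \<in> Ve)) in (w0, \<lambda>c. dlt_c F (synd G w0 c)))"
| "tstate F G Ve (Suc l) =
     (let w = fst (tstate F G Ve l); z = snd (tstate F G Ve l);
          w' = (\<lambda>v. tf F (w v) (chi G z v))
      in (w', \<lambda>c. Phi (synd G w c) (synd G w' c)))"

definition zero_synd :: "tbf \<Rightarrow> 'v tgraph \<Rightarrow> 'v set \<Rightarrow> nat \<Rightarrow> bool" where
  "zero_synd F G Ve l \<longleftrightarrow> (\<forall>c\<in>cn G. \<not> synd G (fst (tstate F G Ve l)) c)"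

definition converges :: "tbf \<Rightarrow> 'v tgraph \<Rightarrow> 'v set \<Rightarrow> bool" where
  "converges F G Ve \<longleftrightarrow> (\<exists>l\<le>lmax F. zero_synd F G Ve l)"

definition fails_on :: "tbf \<Rightarrow> 'v tgraph \<Rightarrow> 'v tgraph \<Rightarrow> bool" where
  "fails_on F S J \<longleftrightarrow> \<not> converges F S (vn J)"

definition in_E :: "nat \<Rightarrow> tbf \<Rightarrow> 'w tgraph \<Rightarrow> 'v tgraph \<Rightarrow> bool" where
  "in_E dv F I S \<longleftrightarrow> tanner dv S \<and>
     (\<exists>J. subgraph J S \<and> isomorphic J I \<and> fails_on F S J)"

definition in_Er :: "nat \<Rightarrow> tbf \<Rightarrow> 'w tgraph \<Rightarrow> 'v tgraph \<Rightarrow> bool" where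
  "in_Er dv F I S1 \<longleftrightarrow> tanner dv S1 \<and>
     (\<exists>J1. subgraph J1 S1 \<and> isomorphic J1 I \<and> fails_on F S1 J1 \<and>
        \<not> (\<exists>(S2 :: 'v tgraph) J2 U \<phi>.
              tanner dv S2 \<and> subgraph J2 S2 \<and> isomorphic J2 I \<and> fails_on F S2 J2 \<and>
              subgraph U S1 \<and> U \<noteq> S1 \<and> iso \<phi> S2 U \<and> \<phi> ` vn J2 \<subseteq> vn J1))"

end

theory Submission
  imports Defs
begin
lemma tstate_eq:
  assumes "vn G' = vn G" "ed G' = ed G" "cn G' \<subseteq> cn G" "ed G \<subseteq> vn G \<times> cn G'"
  shows "tstate F G Ve l = tstate F G' Ve l"
proof -
  have s: "synd G = synd G'" using assms(1,2) by (simp add: synd_def fun_eq_iff)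
  have c: "chi G = chi G'"
  proof -
    have "\<And>v P. {c \<in> cn G. (v, c) \<in> ed G \<and> P c} = {c \<in> cn G'. (v, c) \<in> ed G' \<and> P c}"
      using assms by blast
    then show ?thesis by (simp add: chi_def fun_eq_iff)
  qed
  show ?thesis by (induction l) (simp_all add: s c Let_def)
qed
lemma converges_eq:
  assumes "vn G' = vn G" "ed G' = ed G" "cn G' \<subseteq> cn G" "ed G \<subseteq> vn G \<times> cn G'"
  shows "converges F G Ve = converges F G' Ve"
proof -
  have "zero_synd F G Ve l = zero_synd F G' Ve l" for l
  proof -
    have t: "tstate F G Ve l = tstate F G' Ve l" by (rule tstate_eq[OF assms])
    have "\<not> synd G w c" if "c \<in> cn G" "c \<notin> cn G'" for w c
    proof -
      have e: "{v \<in> vn G. (v, c) \<in> ed G \<and> vbit (w v)} = {}" using assms(4) that by blast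
      show ?thesis unfolding synd_def e by simp
    qed
    moreover have s: "synd G = synd G'" using assms(1,2) by (simp add: synd_def fun_eq_iff)
    ultimately show ?thesis unfolding zero_synd_def t using assms(3) by (metis subsetD)
  qed
  then show ?thesis by (simp add: converges_def)
qed
lemma iso_inv:
  assumes "iso \<phi> A B" "vn B \<inter> cn B = {}"
  shows "iso (inv_into (vn A \<union> cn A) \<phi>) B A"
proof -
  have bv: "bij_betw \<phi> (vn A) (vn B)" and bc: "bij_betw \<phi> (cn A) (cn B)"
    using assms by (auto simp: iso_def)
  have inj: "inj_on \<phi> (vn A \<union> cn A)"
    unfolding inj_on_Un using bv bc assms(2) by (auto simp: bij_betw_def)
  have b: "bij_betw \<phi> (vn A \<union> cn A) (vn B \<union> cn B)"
    using inj bv bc by (auto simp: bij_betw_def image_Un)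
  have 1: "bij_betw (inv_into (vn A \<union> cn A) \<phi>) (vn B) (vn A)"
    by (rule bij_betw_inv_into_subset[OF b]) (use bv in \<open>auto simp: bij_betw_def\<close>)
  have 2: "bij_betw (inv_into (vn A \<union> cn A) \<phi>) (cn B) (cn A)"
    by (rule bij_betw_inv_into_subset[OF b]) (use bc in \<open>auto simp: bij_betw_def\<close>)
  have 3: "(b, d) \<in> ed B \<longleftrightarrow> (inv_into (vn A \<union> cn A) \<phi> b, inv_into (vn A \<union> cn A) \<phi> d) \<in> ed A"
    if "b \<in> vn B" "d \<in> cn B" for b d
  proof -
    let ?a = "inv_into (vn A \<union> cn A) \<phi> b" and ?c = "inv_into (vn A \<union> cn A) \<phi> d"
    have "?a \<in> vn A" "?c \<in> cn A" using 1 2 that by (auto simp: bij_betw_def)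
    moreover have "\<phi> ?a = b" "\<phi> ?c = d" using b that
      by (auto simp: bij_betw_def intro!: f_inv_into_f)
    ultimately show ?thesis using assms(1) by (auto simp: iso_def)
  qed
  show ?thesis using 1 2 3 by (auto simp: iso_def)
qed


definition msr :: "'v tgraph \<Rightarrow> nat" where
  "msr G = card (vn G) + card (cn G) + card (ed G)"

lemma card_iso:
  assumes "bigraph A" "bigraph B" "iso \<phi> A B"
  shows "msr A = msr B"
proof -
  have bv: "bij_betw \<phi> (vn A) (vn B)" and bc: "bij_betw \<phi> (cn A) (cn B)"
   and ee: "\<forall>v\<in>vn A. \<forall>c\<in>cn A. (v, c) \<in> ed A \<longleftrightarrow> (\<phi> v, \<phi> c) \<in> ed B"
    using assms(3) by (auto simp: iso_def)
  have eA: "ed A \<subseteq> vn A \<times> cn A" and eB: "ed B \<subseteq> vn B \<times> cn B"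
    using assms(1,2) by (auto simp: bigraph_def)
  have "bij_betw (\<lambda>(a, c). (\<phi> a, \<phi> c)) (ed A) (ed B)"
    unfolding bij_betw_def
  proof
    show "inj_on (\<lambda>(a, c). (\<phi> a, \<phi> c)) (ed A)"
    proof (rule inj_onI, clarify)
      fix a c a' c' assume "(a, c) \<in> ed A" "(a', c') \<in> ed A" "\<phi> a = \<phi> a'" "\<phi> c = \<phi> c'"
      then show "a = a' \<and> c = c'" using eA bv bc
        by (auto simp: bij_betw_def dest: inj_onD)
    qed
    show "(\<lambda>(a, c). (\<phi> a, \<phi> c)) ` ed A = ed B"
    proof
      show "(\<lambda>(a, c). (\<phi> a, \<phi> c)) ` ed A \<subseteq> ed B" using ee eA by auto
      show "ed B \<subseteq> (\<lambda>(a, c). (\<phi> a, \<phi> c)) ` ed A"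
      proof clarify
        fix b d assume bd: "(b, d) \<in> ed B"
        then have "b \<in> \<phi> ` vn A" "d \<in> \<phi> ` cn A" using eB bv bc by (auto simp: bij_betw_def)
        then obtain a c where "a \<in> vn A" "c \<in> cn A" "b = \<phi> a" "d = \<phi> c" by blast
        with bd ee show "(b, d) \<in> (\<lambda>(a, c). (\<phi> a, \<phi> c)) ` ed A" by force
      qed
    qed
  qed
  then have "card (ed A) = card (ed B)" by (rule bij_betw_same_card)
  moreover have "card (vn A) = card (vn B)" using bv by (rule bij_betw_same_card)
  moreover have "card (cn A) = card (cn B)" using bc by (rule bij_betw_same_card)
  ultimately show ?thesis by (simp add: msr_def)
qed

lemma subgraph_lt:
  assumes "subgraph U S" "bigraph S" "U \<noteq> S"
  shows "msr U < msr S"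
proof -
  have f: "finite (vn S)" "finite (cn S)" "finite (ed S)"
    using assms(2) unfolding bigraph_def by (auto intro: finite_subset)
  have s: "vn U \<subseteq> vn S" "cn U \<subseteq> cn S" "ed U \<subseteq> ed S" using assms(1) by (auto simp: subgraph_def)
  have "vn U \<noteq> vn S \<or> cn U \<noteq> cn S \<or> ed U \<noteq> ed S"
    using assms(3) by (cases U, cases S) auto
  then have "card (vn U) < card (vn S) \<or> card (cn U) < card (cn S) \<or> card (ed U) < card (ed S)"
    using s f by (meson psubset_card_mono psubset_eq)
  moreover have "card (vn U) \<le> card (vn S)" "card (cn U) \<le> card (cn S)" "card (ed U) \<le> card (ed S)"
    using s f by (auto intro: card_mono)
  ultimately show ?thesis unfolding msr_def by linarith
qed

definition emb :: "('v \<Rightarrow> 'v) \<Rightarrow> 'v tgraph \<Rightarrow> 'v tgraph \<Rightarrow> bool" where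
  "emb \<psi> S G \<longleftrightarrow> inj_on \<psi> (vn S) \<and> inj_on \<psi> (cn S) \<and> \<psi> ` vn S \<subseteq> vn G \<and> \<psi> ` cn S \<subseteq> cn G
     \<and> (\<forall>a c. (a, c) \<in> ed S \<longrightarrow> (\<psi> a, \<psi> c) \<in> ed G)"

lemma jchk:
  assumes "iso \<phi> J (induced G Ve)" "c \<in> cn J"
  shows "\<exists>v. (v, c) \<in> ed J"
proof -
  have "\<phi> c \<in> cn (induced G Ve)" using assms by (auto simp: iso_def bij_betw_def)
  then obtain v' where v': "v' \<in> Ve" "(v', \<phi> c) \<in> ed G" by (auto simp: induced_def)
  have "Ve = \<phi> ` vn J" using assms(1) by (auto simp: iso_def bij_betw_def induced_def)
  then obtain v where "v \<in> vn J" "v' = \<phi> v" using v' by blast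
  then have "(v, c) \<in> ed J" using assms v' by (auto simp: iso_def induced_def)
  then show ?thesis by blast
qed


theorem proposition2:
  fixes dv :: nat and F :: tbf and G :: "'v tgraph" and Ve :: "'v set"
  assumes "is_TBF dv F"
    and "tanner dv G"
    and "Ve \<subseteq> vn G"
    and "\<not> (\<exists>Vs (S :: 'v tgraph). Ve \<subseteq> Vs \<and> Vs \<subseteq> vn G \<and>
              in_Er dv F (induced G Ve) S \<and> isomorphic (induced G Vs) S)"
  shows "converges F G Ve"
proof (rule ccontr)
  assume nc: "\<not> converges F G Ve"
  let ?I = "induced G Ve"
  define Q where "Q S J \<psi> \<longleftrightarrow> tanner dv S \<and> subgraph J S \<and> isomorphic J ?I \<and> fails_on F S J
      \<and> emb \<psi> S G \<and> \<psi> ` vn J = Ve" for S J :: "'v tgraph" and \<psi>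
  have bG: "bigraph G" and degG: "\<forall>v\<in>vn G. card {c. (v, c) \<in> ed G} = dv"
    using assms(2) by (auto simp: tanner_def)
  have finVe: "finite Ve" using bG assms(3) by (auto simp: bigraph_def intro: finite_subset)
  have bI: "bigraph ?I" using bG assms(3) finVe by (auto simp: bigraph_def induced_def)
  have isoI: "iso id ?I ?I" by (simp add: iso_def)
  have Q0: "Q G ?I id"
    unfolding Q_def using assms(2) bI isoI nc assms(3)
    by (auto simp: subgraph_def induced_def isomorphic_def fails_on_def emb_def)
  obtain x where x1: "Q (fst x) (fst (snd x)) (snd (snd x))"
      and x2: "\<forall>y. Q (fst y) (fst (snd y)) (snd (snd y)) \<longrightarrow> msr (fst x) \<le> msr (fst y)"
    using ex_has_least_nat[of "\<lambda>x. Q (fst x) (fst (snd x)) (snd (snd x))" "(G, ?I, id)"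
        "\<lambda>x. msr (fst x)"] Q0 by auto
  obtain S J \<psi> where QS: "Q S J \<psi>" and mn: "\<And>S' J' \<psi>'. Q S' J' \<psi>' \<Longrightarrow> msr S \<le> msr S'"
  proof
    show "Q (fst x) (fst (snd x)) (snd (snd x))" by (rule x1)
    fix S' J' \<psi>' assume "Q S' J' \<psi>'"
    then show "msr (fst x) \<le> msr S'" using x2[rule_format, of "(S', J', \<psi>')"] by simp
  qed
  have tS: "tanner dv S" and sJ: "subgraph J S" and iJ: "isomorphic J ?I" and fJ: "fails_on F S J"
    and eS: "emb \<psi> S G" and VJ: "\<psi> ` vn J = Ve"
    using QS by (auto simp: Q_def)
  have bS: "bigraph S" using tS by (simp add: tanner_def)
  have degS: "\<forall>v\<in>vn S. card {c. (v, c) \<in> ed S} = dv" using tS by (simp add: tanner_def)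
  obtain \<phi>J where phiJ: "iso \<phi>J J ?I" using iJ by (auto simp: isomorphic_def)
  have bJ: "bigraph J" using sJ by (simp add: subgraph_def)
  have cardJ: "card (vn J) = card Ve"
    using phiJ by (auto simp: iso_def induced_def dest: bij_betw_same_card)
  have noiso: "\<exists>v. (v, c) \<in> ed S" if c0: "c \<in> cn S" for c
  proof (rule ccontr)
    assume ni: "\<not> (\<exists>v. (v, c) \<in> ed S)"
    define S2 where "S2 = S\<lparr>cn := cn S - {c}\<rparr>"
    have S2: "vn S2 = vn S" "ed S2 = ed S" "cn S2 = cn S - {c}" by (simp_all add: S2_def)
    have eS2: "ed S \<subseteq> vn S \<times> cn S2" using bS ni S2 by (auto simp: bigraph_def)
    have bS2: "bigraph S2" using bS eS2 S2 by (auto simp: bigraph_def)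
    have tS2: "tanner dv S2" using bS2 degS S2 by (simp add: tanner_def)
    have "c \<notin> cn J" using jchk[OF phiJ] ni sJ unfolding subgraph_def by blast
    then have sJ2: "subgraph J S2" using sJ S2 by (auto simp: subgraph_def)
    have "converges F S (vn J) = converges F S2 (vn J)"
      by (rule converges_eq) (use S2 eS2 in auto)
    then have fJ2: "fails_on F S2 J" using fJ by (simp add: fails_on_def)
    have "emb \<psi> S2 G" using eS S2 by (auto simp: emb_def inj_on_subset)
    then have "Q S2 J \<psi>" using tS2 sJ2 iJ fJ2 VJ by (simp add: Q_def)
    then have "msr S \<le> msr S2" by (rule mn)
    moreover have "msr S2 < msr S"
    proof (rule subgraph_lt[OF _ bS])
      show "subgraph S2 S" using bS2 S2 by (auto simp: subgraph_def)
      show "S2 \<noteq> S" using S2 c0 by auto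
    qed
    ultimately show False by simp
  qed
  \<comment> \<open>minimality gives in_Er\<close>
  have H: "False" if tS2: "tanner dv S2" and sJ2: "subgraph J2 S2"
        and iJ2: "isomorphic J2 ?I" and fJ2: "fails_on F S2 J2" and sU: "subgraph U S"
        and US: "U \<noteq> S" and iso: "iso \<phi> S2 U" and sub: "\<phi> ` vn J2 \<subseteq> vn J"
      for S2 J2 U :: "'v tgraph" and \<phi> :: "'v \<Rightarrow> 'v"
  proof -
      have bS2: "bigraph S2" using tS2 by (simp add: tanner_def)
      have bU: "bigraph U" using sU by (simp add: subgraph_def)
      have bv: "bij_betw \<phi> (vn S2) (vn U)" and bc: "bij_betw \<phi> (cn S2) (cn U)"
        and ee: "\<forall>v\<in>vn S2. \<forall>c\<in>cn S2. (v, c) \<in> ed S2 \<longleftrightarrow> (\<phi> v, \<phi> c) \<in> ed U"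
        using iso by (auto simp: iso_def)
      have sUv: "vn U \<subseteq> vn S" "cn U \<subseteq> cn S" "ed U \<subseteq> ed S" using sU by (auto simp: subgraph_def)
      have ie1: "inj_on (\<psi> \<circ> \<phi>) (vn S2)"
      proof (rule comp_inj_on)
        show "inj_on \<phi> (vn S2)" using bv by (simp add: bij_betw_def)
        have "\<phi> ` vn S2 \<subseteq> vn S" using bv sUv by (simp add: bij_betw_def)
        moreover have "inj_on \<psi> (vn S)" using eS by (simp add: emb_def)
        ultimately show "inj_on \<psi> (\<phi> ` vn S2)" by (rule inj_on_subset[rotated])
      qed
      have ie2: "inj_on (\<psi> \<circ> \<phi>) (cn S2)"
      proof (rule comp_inj_on)
        show "inj_on \<phi> (cn S2)" using bc by (simp add: bij_betw_def)
        have "\<phi> ` cn S2 \<subseteq> cn S" using bc sUv by (simp add: bij_betw_def)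
        moreover have "inj_on \<psi> (cn S)" using eS by (simp add: emb_def)
        ultimately show "inj_on \<psi> (\<phi> ` cn S2)" by (rule inj_on_subset[rotated])
      qed
      have "emb (\<psi> \<circ> \<phi>) S2 G"
        unfolding emb_def
      proof (intro conjI allI impI)
        show "inj_on (\<psi> \<circ> \<phi>) (vn S2)" "inj_on (\<psi> \<circ> \<phi>) (cn S2)" by fact+
        have "(\<psi> \<circ> \<phi>) ` vn S2 = \<psi> ` vn U" using bv by (metis bij_betw_def image_comp)
        moreover have "\<psi> ` vn U \<subseteq> \<psi> ` vn S" using sUv by (simp add: image_mono)
        moreover have "\<psi> ` vn S \<subseteq> vn G" using eS by (simp add: emb_def)
        ultimately show "(\<psi> \<circ> \<phi>) ` vn S2 \<subseteq> vn G" by simp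
        have "(\<psi> \<circ> \<phi>) ` cn S2 = \<psi> ` cn U" using bc by (metis bij_betw_def image_comp)
        moreover have "\<psi> ` cn U \<subseteq> \<psi> ` cn S" using sUv by (simp add: image_mono)
        moreover have "\<psi> ` cn S \<subseteq> cn G" using eS by (simp add: emb_def)
        ultimately show "(\<psi> \<circ> \<phi>) ` cn S2 \<subseteq> cn G" by simp
        fix a c assume "(a, c) \<in> ed S2"
        then have "(\<phi> a, \<phi> c) \<in> ed U" using ee bS2 by (auto simp: bigraph_def)
        then show "((\<psi> \<circ> \<phi>) a, (\<psi> \<circ> \<phi>) c) \<in> ed G" using sUv eS by (auto simp: emb_def)
      qed
      moreover have "(\<psi> \<circ> \<phi>) ` vn J2 = Ve"
      proof (rule card_subset_eq[OF finVe])
        show "(\<psi> \<circ> \<phi>) ` vn J2 \<subseteq> Ve" using sub VJ by (auto simp: image_comp[symmetric])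
        have vJ2: "vn J2 \<subseteq> vn S2" using sJ2 by (simp add: subgraph_def)
        obtain \<phi>2 where "iso \<phi>2 J2 ?I" using iJ2 by (auto simp: isomorphic_def)
        then have "card (vn J2) = card Ve"
          by (auto simp: iso_def induced_def dest: bij_betw_same_card)
        moreover have "card ((\<psi> \<circ> \<phi>) ` vn J2) = card (vn J2)"
          using ie1 vJ2 by (metis card_image inj_on_subset)
        ultimately show "card ((\<psi> \<circ> \<phi>) ` vn J2) = card Ve" by simp
      qed
      ultimately have "Q S2 J2 (\<psi> \<circ> \<phi>)" using tS2 sJ2 iJ2 fJ2 by (simp add: Q_def)
      then have "msr S \<le> msr S2" by (rule mn)
      moreover have "msr S2 = msr U" by (rule card_iso[OF bS2 bU iso])
      moreover have "msr U < msr S" by (rule subgraph_lt[OF sU bS US])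
      ultimately show False by simp
  qed
  have inEr: "in_Er dv F ?I S"
    unfolding in_Er_def using tS sJ iJ fJ H by blast
  let ?Vs = "\<psi> ` vn S"
  have inj1: "inj_on \<psi> (vn S)" and inj2: "inj_on \<psi> (cn S)" and im1: "\<psi> ` vn S \<subseteq> vn G"
    and im2: "\<psi> ` cn S \<subseteq> cn G" and eim: "\<And>a c. (a, c) \<in> ed S \<Longrightarrow> (\<psi> a, \<psi> c) \<in> ed G"
    using eS by (auto simp: emb_def)
  have nbr: "{d. (\<psi> v, d) \<in> ed G} = \<psi> ` {c. (v, c) \<in> ed S}" if v: "v \<in> vn S" for v
  proof (rule sym, rule card_subset_eq)
    show "finite {d. (\<psi> v, d) \<in> ed G}"
      using bG by (auto simp: bigraph_def intro: finite_subset[of _ "cn G"])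
    show "\<psi> ` {c. (v, c) \<in> ed S} \<subseteq> {d. (\<psi> v, d) \<in> ed G}" using eim by auto
    have "{c. (v, c) \<in> ed S} \<subseteq> cn S" using bS by (auto simp: bigraph_def)
    then have "card (\<psi> ` {c. (v, c) \<in> ed S}) = card {c. (v, c) \<in> ed S}"
      using inj2 by (auto intro: card_image inj_on_subset)
    also have "\<dots> = dv" using degS v by simp
    also have "\<dots> = card {d. (\<psi> v, d) \<in> ed G}" using degG im1 v by auto
    finally show "card (\<psi> ` {c. (v, c) \<in> ed S}) = card {d. (\<psi> v, d) \<in> ed G}" .
  qed
  have "iso \<psi> S (induced G ?Vs)"
    unfolding iso_def
  proof (intro conjI ballI)
    show "bij_betw \<psi> (vn S) (vn (induced G ?Vs))" using inj1 by (simp add: induced_def bij_betw_def)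
    have "\<psi> ` cn S = cn (induced G ?Vs)"
    proof
      show "\<psi> ` cn S \<subseteq> cn (induced G ?Vs)"
      proof
        fix d assume "d \<in> \<psi> ` cn S"
        then obtain c where c: "c \<in> cn S" "d = \<psi> c" by blast
        then obtain v where "(v, c) \<in> ed S" using noiso by blast
        moreover then have "v \<in> vn S" using bS by (auto simp: bigraph_def)
        ultimately show "d \<in> cn (induced G ?Vs)" using c im2 eim by (auto simp: induced_def)
      qed
      show "cn (induced G ?Vs) \<subseteq> \<psi> ` cn S"
      proof
        fix d assume "d \<in> cn (induced G ?Vs)"
        then obtain v where v: "v \<in> vn S" "(\<psi> v, d) \<in> ed G" by (auto simp: induced_def)
        then have "d \<in> \<psi> ` {c. (v, c) \<in> ed S}" using nbr by blast
        then show "d \<in> \<psi> ` cn S" using bS by (auto simp: bigraph_def)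
      qed
    qed
    then show "bij_betw \<psi> (cn S) (cn (induced G ?Vs))" using inj2 by (simp add: bij_betw_def)
    fix v c assume v: "v \<in> vn S" and c: "c \<in> cn S"
    show "(v, c) \<in> ed S \<longleftrightarrow> (\<psi> v, \<psi> c) \<in> ed (induced G ?Vs)"
    proof
      assume "(v, c) \<in> ed S"
      then show "(\<psi> v, \<psi> c) \<in> ed (induced G ?Vs)" using eim v by (auto simp: induced_def)
    next
      assume "(\<psi> v, \<psi> c) \<in> ed (induced G ?Vs)"
      then have "\<psi> c \<in> \<psi> ` {c. (v, c) \<in> ed S}" using nbr[OF v] by (auto simp: induced_def)
      then obtain c' where c': "(v, c') \<in> ed S" "\<psi> c = \<psi> c'" by blast
      then have "c' \<in> cn S" using bS by (auto simp: bigraph_def)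
      then have "c = c'" using inj2 c c' by (auto dest: inj_onD)
      then show "(v, c) \<in> ed S" using c' by simp
    qed
  qed
  moreover have "vn (induced G ?Vs) \<inter> cn (induced G ?Vs) = {}"
    using bG im1 by (auto simp: induced_def bigraph_def)
  ultimately have "isomorphic (induced G ?Vs) S"
    unfolding isomorphic_def by (blast intro: iso_inv)
  moreover have "Ve \<subseteq> ?Vs" using VJ sJ by (auto simp: subgraph_def)
  ultimately show False using assms(4) inEr im1 by blast
qed

end
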